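(* Let $d\ge1$, put $r=\lfloor (d-1)/2\rfloor$, and let $N=-1$ if $d$ is even and $N=r$ if $d$ is odd. Then the numbers $h^{(d)}_{i,j}$ increase weakly along the following chain: for each $0\le i\le r$, $h^{(d)}_{i,d}\le h^{(d)}_{i,d-1}\le\cdots\le h^{(d)}_{i,-1}$ (for $i<r$), and $h^{(d)}_{i,-1}\le h^{(d)}_{i+1,d}$ for $0\le i<r$, while the last segment is $h^{(d)}_{r,d}\le h^{(d)}_{r,d-1}\le\cdots\le h^{(d)}_{r,N}$. That is, $$h^{(d)}_{0,d}\le\cdots\le h^{(d)}_{0,-1}\le h^{(d)}_{1,d}\le\cdots\le h^{(d)}_{1,-1}\le\cdots\le h^{(d)}_{r,d}\le\cdots\le h^{(d)}_{r,N}.$$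
   Context: For $m\ge1$ and a permutation $\sigma$ of $[m]=\{1,\dots,m\}$, $\mathrm{des}(\sigma)$ is the number of $1\le t\le m-1$ with $\sigma(t)>\sigma(t+1)$; $A(m,i,j)$ is the number of permutations $\sigma$ of $[m]$ with $\mathrm{des}(\sigma)=i$ and $\sigma(1)=j$ (and $A(m,i,j)=0$ if $i<0$). For $d\ge0$ and $-1\le i,j\le d$ define $h^{(d)}_{i,j}=A(d+2,i+1,j+2)$. *)

theory Defs
  imports "HOL-Combinatorics.Permutations"
begin

definition des :: "nat \<Rightarrow> (nat \<Rightarrow> nat) \<Rightarrow> nat" where
  "des m \<sigma> = card {t \<in> {1..<m}. \<sigma> t > \<sigma> (Suc t)}"

definition A :: "nat \<Rightarrow> int \<Rightarrow> int \<Rightarrow> nat" where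
  "A m i j = (if i < 0 then 0 else
     card {\<sigma>. \<sigma> permutes {1..m} \<and> int (des m \<sigma>) = i \<and> int (\<sigma> 1) = j})"

definition h :: "nat \<Rightarrow> int \<Rightarrow> int \<Rightarrow> nat" where
  "h d i j = A (d + 2) (i + 1) (j + 2)"

end

theory Submission imports Defs begin

definition sh :: "nat \<Rightarrow> nat \<Rightarrow> nat" where "sh f x = (if x < f then x else x - 1)"
definition up :: "nat \<Rightarrow> nat \<Rightarrow> nat" where "up f y = (if y < f then y else y + 1)"
definition fwd :: "nat \<Rightarrow> nat \<Rightarrow> (nat \<Rightarrow> nat) \<Rightarrow> nat \<Rightarrow> nat" where
  "fwd n f \<sigma> = (\<lambda>t. if t \<in> {1..n} then sh f (\<sigma> (Suc t)) else t)"
definition bwd :: "nat \<Rightarrow> nat \<Rightarrow> (nat \<Rightarrow> nat) \<Rightarrow> nat \<Rightarrow> nat" where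
  "bwd n f \<tau> = (\<lambda>x. if x = 1 then f else if x \<in> {2..Suc n} then up f (\<tau> (x - 1)) else x)"

lemma fwd_perm:
  assumes p: "\<sigma> permutes {1..Suc n}" and f: "\<sigma> 1 = f"
  shows "fwd n f \<sigma> permutes {1..n}"
proof (rule bij_imp_permutes)
  have inj: "inj \<sigma>" using p by (rule permutes_inj)
  have im: "\<And>x. \<sigma> x \<in> {1..Suc n} \<longleftrightarrow> x \<in> {1..Suc n}" using p by (rule permutes_in_image)
  have ne: "\<And>t. t \<in> {1..n} \<Longrightarrow> \<sigma> (Suc t) \<noteq> f"
    using inj f by (metis Suc_neq_Zero atLeastAtMost_iff injD le_numeral_extra(3) One_nat_def Suc_inject le_zero_eq)
  have sub: "fwd n f \<sigma> ` {1..n} \<subseteq> {1..n}"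
  proof
    fix y assume "y \<in> fwd n f \<sigma> ` {1..n}"
    then obtain t where t: "t \<in> {1..n}" "y = sh f (\<sigma> (Suc t))" by (auto simp: fwd_def)
    have "\<sigma> (Suc t) \<in> {1..Suc n}" using im t by auto
    moreover have "f \<in> {1..Suc n}" using im[of 1] f by simp
    ultimately show "y \<in> {1..n}" using t ne[OF t(1)] by (auto simp: sh_def)
  qed
  have "inj_on (fwd n f \<sigma>) {1..n}"
  proof (rule inj_onI)
    fix a b assume a: "a \<in> {1..n}" and b: "b \<in> {1..n}" and e: "fwd n f \<sigma> a = fwd n f \<sigma> b"
    hence "sh f (\<sigma> (Suc a)) = sh f (\<sigma> (Suc b))" by (simp add: fwd_def)
    hence "\<sigma> (Suc a) = \<sigma> (Suc b)" using ne[OF a] ne[OF b] by (auto simp: sh_def split: if_splits)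
    thus "a = b" using inj by (simp add: inj_eq)
  qed
  thus "bij_betw (fwd n f \<sigma>) {1..n} {1..n}"
    using sub endo_inj_surj[OF _ sub] by (simp add: bij_betw_def)
  show "\<And>x. x \<notin> {1..n} \<Longrightarrow> fwd n f \<sigma> x = x" unfolding fwd_def by presburger
qed

lemma bwd_perm:
  assumes p: "\<tau> permutes {1..n}" and f: "f \<in> {1..Suc n}"
  shows "bwd n f \<tau> permutes {1..Suc n}"
proof (rule bij_imp_permutes)
  have inj: "inj \<tau>" using p by (rule permutes_inj)
  have im: "\<And>x. \<tau> x \<in> {1..n} \<longleftrightarrow> x \<in> {1..n}" using p by (rule permutes_in_image)
  have sub: "bwd n f \<tau> ` {1..Suc n} \<subseteq> {1..Suc n}"
  proof
    fix y assume "y \<in> bwd n f \<tau> ` {1..Suc n}"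
    then obtain x where x: "x \<in> {1..Suc n}" "y = bwd n f \<tau> x" by auto
    show "y \<in> {1..Suc n}"
    proof (cases "x = 1")
      case True thus ?thesis using x f by (simp add: bwd_def)
    next
      case False
      hence "x - 1 \<in> {1..n}" using x by auto
      hence "\<tau> (x - 1) \<in> {1..n}" using im by blast
      thus ?thesis using x False by (auto simp: bwd_def up_def)
    qed
  qed
  have "inj_on (bwd n f \<tau>) {1..Suc n}"
  proof (rule inj_onI)
    fix a b assume a: "a \<in> {1..Suc n}" and b: "b \<in> {1..Suc n}" and e: "bwd n f \<tau> a = bwd n f \<tau> b"
    have upne: "\<And>y. up f y \<noteq> f" by (simp add: up_def)
    have upinj: "\<And>y z. up f y = up f z \<Longrightarrow> y = z" by (auto simp: up_def split: if_splits)
    show "a = b"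
    proof (cases "a = 1")
      case True
      thus ?thesis using e b upne by (auto simp: bwd_def split: if_splits) (metis upne)
    next
      case False
      show ?thesis
      proof (cases "b = 1")
        case True thus ?thesis using e a upne False by (auto simp: bwd_def split: if_splits)
      next
        case False2: False
        have "up f (\<tau> (a - 1)) = up f (\<tau> (b - 1))" using e a b False False2 by (simp add: bwd_def)
        hence "\<tau> (a - 1) = \<tau> (b - 1)" by (rule upinj)
        hence "a - 1 = b - 1" using inj by (simp add: inj_eq)
        thus ?thesis using a b False False2 by auto
      qed
    qed
  qed
  thus "bij_betw (bwd n f \<tau>) {1..Suc n} {1..Suc n}"
    using sub endo_inj_surj[OF _ sub] by (simp add: bij_betw_def)
  show "\<And>x. x \<notin> {1..Suc n} \<Longrightarrow> bwd n f \<tau> x = x" by (auto simp: bwd_def)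
qed

lemma fwd_bwd:
  assumes p: "\<tau> permutes {1..n}"
  shows "fwd n f (bwd n f \<tau>) = \<tau>"
proof
  fix t show "fwd n f (bwd n f \<tau>) t = \<tau> t"
    using permutes_not_in[OF p, of t] by (auto simp: fwd_def bwd_def sh_def up_def)
qed

lemma bwd_fwd:
  assumes p: "\<sigma> permutes {1..Suc n}" and f: "\<sigma> 1 = f"
  shows "bwd n f (fwd n f \<sigma>) = \<sigma>"
proof
  have inj: "inj \<sigma>" using p by (rule permutes_inj)
  fix x show "bwd n f (fwd n f \<sigma>) x = \<sigma> x"
  proof (cases "x = 1")
    case True thus ?thesis using f by (simp add: bwd_def)
  next
    case False
    show ?thesis
    proof (cases "x \<in> {2..Suc n}")
      case True
      have "\<sigma> x \<noteq> f" using inj f False by (metis injD)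
      thus ?thesis using True False by (auto simp: bwd_def fwd_def sh_def up_def)
    next
      case F2: False
      thus ?thesis using False permutes_not_in[OF p, of x] by (auto simp: bwd_def)
    qed
  qed
qed

lemma sh_mono: "a \<noteq> f \<Longrightarrow> b \<noteq> f \<Longrightarrow> sh f a < sh f b \<longleftrightarrow> a < b"
  by (auto simp: sh_def)

lemma des_fwd:
  assumes p: "\<sigma> permutes {1..Suc n}" and f: "\<sigma> 1 = f" and n: "n \<ge> 1"
  shows "des (Suc n) \<sigma> = (if fwd n f \<sigma> 1 < f then 1 else 0) + des n (fwd n f \<sigma>)"
proof -
  let ?t = "fwd n f \<sigma>"
  have inj: "inj \<sigma>" using p by (rule permutes_inj)
  have ne: "\<And>x. x \<noteq> 1 \<Longrightarrow> \<sigma> x \<noteq> f" using inj f by (metis injD)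
  define Y where "Y = {t \<in> {1..<n}. ?t t > ?t (Suc t)}"
  define A0 where "A0 = (if \<sigma> 2 < f then {1::nat} else {})"
  have t1: "?t 1 < f \<longleftrightarrow> \<sigma> 2 < f" using n ne[of 2] by (auto simp: fwd_def sh_def numeral_2_eq_2)
  have eqv: "\<And>t. t \<in> {1..<n} \<Longrightarrow> ?t t > ?t (Suc t) \<longleftrightarrow> \<sigma> (Suc t) > \<sigma> (Suc (Suc t))"
  proof -
    fix t assume t: "t \<in> {1..<n}"
    have "?t t = sh f (\<sigma> (Suc t))" "?t (Suc t) = sh f (\<sigma> (Suc (Suc t)))" using t by (auto simp: fwd_def)
    thus "?t t > ?t (Suc t) \<longleftrightarrow> \<sigma> (Suc t) > \<sigma> (Suc (Suc t))"
      using sh_mono[OF ne ne, of "Suc (Suc t)" "Suc t"] t by simp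
  qed
  have X: "{t \<in> {1..<Suc n}. \<sigma> t > \<sigma> (Suc t)} = A0 \<union> Suc ` Y"
  proof (rule set_eqI)
    fix x
    show "x \<in> {t \<in> {1..<Suc n}. \<sigma> t > \<sigma> (Suc t)} \<longleftrightarrow> x \<in> A0 \<union> Suc ` Y"
    proof (cases "x = 1")
      case True thus ?thesis using n f by (auto simp: A0_def Y_def numeral_2_eq_2)
    next
      case False
      show ?thesis
      proof (cases x)
        case 0 thus ?thesis by (auto simp: A0_def Y_def)
      next
        case (Suc t)
        hence "t \<noteq> 0" using False by simp
        thus ?thesis using Suc eqv[of t] False by (auto simp: A0_def Y_def)
      qed
    qed
  qed
  have "des (Suc n) \<sigma> = card (A0 \<union> Suc ` Y)" unfolding des_def X ..
  also have "\<dots> = card A0 + card (Suc ` Y)"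
    by (rule card_Un_disjoint) (auto simp: A0_def Y_def)
  also have "card (Suc ` Y) = card Y" by (simp add: card_image)
  also have "card Y = des n ?t" by (simp add: des_def Y_def)
  finally show ?thesis using t1 by (simp add: A0_def)
qed

lemma A_rec:
  assumes n: "n \<ge> 1" and f1: "1 \<le> f" and f2: "f \<le> Suc n"
  shows "A (Suc n) i (int f) = (\<Sum>g\<in>{1..<f}. A n (i-1) (int g)) + (\<Sum>g\<in>{f..n}. A n i (int g))"
proof (cases "i < 0")
  case True thus ?thesis by (simp add: A_def)
next
  case False
  define S1 where "S1 = {\<sigma>. \<sigma> permutes {1..Suc n} \<and> int (des (Suc n) \<sigma>) = i \<and> int (\<sigma> 1) = int f}"
  define S2 where "S2 = {\<tau>. \<tau> permutes {1..n} \<and> int (des n \<tau>) + (if \<tau> 1 < f then 1 else 0) = i}"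
  define S2g where "S2g = (\<lambda>g. {\<tau>. \<tau> permutes {1..n} \<and> int (des n \<tau>) + (if g < f then 1 else 0) = i \<and> \<tau> 1 = g})"
  have fS: "f \<in> {1..Suc n}" using f1 f2 by simp
  have "bij_betw (fwd n f) S1 S2"
  proof (rule bij_betw_byWitness[where f'="bwd n f"])
    show "\<forall>a\<in>S1. bwd n f (fwd n f a) = a" by (auto simp: S1_def intro: bwd_fwd)
    show "\<forall>a\<in>S2. fwd n f (bwd n f a) = a" by (auto simp: S2_def intro: fwd_bwd)
    show "fwd n f ` S1 \<subseteq> S2"
    proof
      fix y assume "y \<in> fwd n f ` S1"
      then obtain \<sigma> where s: "\<sigma> \<in> S1" "y = fwd n f \<sigma>" by auto
      hence p: "\<sigma> permutes {1..Suc n}" and ff: "\<sigma> 1 = f" and d: "int (des (Suc n) \<sigma>) = i" by (auto simp: S1_def)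
      show "y \<in> S2" using fwd_perm[OF p ff] des_fwd[OF p ff n] d s(2) by (auto simp: S2_def)
    qed
    show "bwd n f ` S2 \<subseteq> S1"
    proof
      fix y assume "y \<in> bwd n f ` S2"
      then obtain \<tau> where s: "\<tau> \<in> S2" "y = bwd n f \<tau>" by auto
      hence p: "\<tau> permutes {1..n}" and d: "int (des n \<tau>) + (if \<tau> 1 < f then 1 else 0) = i" by (auto simp: S2_def)
      have p2: "y permutes {1..Suc n}" using bwd_perm[OF p fS] s(2) by simp
      have y1: "y 1 = f" using s(2) by (simp add: bwd_def)
      have "fwd n f y = \<tau>" using s(2) fwd_bwd[OF p] by simp
      hence "des (Suc n) y = (if \<tau> 1 < f then 1 else 0) + des n \<tau>" using des_fwd[OF p2 y1 n] by simp
      thus "y \<in> S1" using p2 y1 d by (auto simp: S1_def)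
    qed
  qed
  hence c1: "card S1 = card S2" by (rule bij_betw_same_card)
  have S2U: "S2 = (\<Union>g\<in>{1..n}. S2g g)"
  proof (rule set_eqI)
    fix \<tau> show "\<tau> \<in> S2 \<longleftrightarrow> \<tau> \<in> (\<Union>g\<in>{1..n}. S2g g)"
    proof
      assume "\<tau> \<in> S2"
      hence p: "\<tau> permutes {1..n}" by (simp add: S2_def)
      have "\<tau> 1 \<in> {1..n}" using permutes_in_image[OF p, of 1] n by simp
      thus "\<tau> \<in> (\<Union>g\<in>{1..n}. S2g g)" using \<open>\<tau> \<in> S2\<close> by (auto simp: S2_def S2g_def)
    qed (auto simp: S2_def S2g_def)
  qed
  have finP: "finite {\<tau>. \<tau> permutes {1..n}}" by (rule finite_permutations) simp
  have "card S2 = (\<Sum>g\<in>{1..n}. card (S2g g))"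
    unfolding S2U
    by (rule card_UN_disjoint) (auto simp: S2g_def intro: finite_subset[OF _ finP])
  also have "{1..n} = {1..<f} \<union> {f..n}" using f1 f2 by auto
  also have "(\<Sum>g\<in>{1..<f} \<union> {f..n}. card (S2g g)) = (\<Sum>g\<in>{1..<f}. card (S2g g)) + (\<Sum>g\<in>{f..n}. card (S2g g))"
    by (rule sum.union_disjoint) auto
  also have "(\<Sum>g\<in>{1..<f}. card (S2g g)) = (\<Sum>g\<in>{1..<f}. A n (i-1) (int g))"
  proof (rule sum.cong[OF refl])
    fix g assume g: "g \<in> {1..<f}"
    show "card (S2g g) = A n (i-1) (int g)"
    proof (cases "i - 1 < 0")
      case True
      hence "S2g g = {}" using g False by (auto simp: S2g_def)
      thus ?thesis using True by (simp add: A_def)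
    next
      case F: False
      have "S2g g = {\<sigma>. \<sigma> permutes {1..n} \<and> int (des n \<sigma>) = i - 1 \<and> int (\<sigma> 1) = int g}"
        using g by (auto simp: S2g_def)
      thus ?thesis using F by (simp add: A_def)
    qed
  qed
  also have "(\<Sum>g\<in>{f..n}. card (S2g g)) = (\<Sum>g\<in>{f..n}. A n i (int g))"
  proof (rule sum.cong[OF refl])
    fix g assume g: "g \<in> {f..n}"
    have "S2g g = {\<sigma>. \<sigma> permutes {1..n} \<and> int (des n \<sigma>) = i \<and> int (\<sigma> 1) = int g}"
      using g by (auto simp: S2g_def)
    thus "card (S2g g) = A n i (int g)" using False by (simp add: A_def)
  qed
  finally show ?thesis using c1 False by (simp add: A_def S1_def)
qed

lemma des_1: "des 1 \<sigma> = 0" by (simp add: des_def)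

lemma A_sym:
  assumes "m \<ge> 1" "1 \<le> f" "f \<le> m"
  shows "A m i (int f) = A m (int m - 1 - i) (int (m + 1 - f))"
  using assms
proof (induction m arbitrary: i f rule: nat_induct_at_least)
  case base
  hence f: "f = 1" by simp
  show ?case using f by (auto simp: A_def des_def)
next
  case (Suc n)
  have "A (Suc n) (int (Suc n) - 1 - i) (int (Suc n + 1 - f)) =
     (\<Sum>g\<in>{1..<Suc n + 1 - f}. A n (int n - 1 - i) (int g)) + (\<Sum>g\<in>{Suc n + 1 - f..n}. A n (int n - i) (int g))"
    using A_rec[OF Suc.hyps(1), of "Suc n + 1 - f" "int (Suc n) - 1 - i"] Suc.prems by (simp add: algebra_simps)
  also have "(\<Sum>g\<in>{1..<Suc n + 1 - f}. A n (int n - 1 - i) (int g)) = (\<Sum>g\<in>{f..n}. A n i (int g))"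
  proof (rule sum.reindex_bij_witness[where i="\<lambda>g. n + 1 - g" and j="\<lambda>g. n + 1 - g"])
    fix g assume g: "g \<in> {1..<Suc n + 1 - f}"
    show "n + 1 - (n + 1 - g) = g" using g Suc.prems by auto
    show "n + 1 - g \<in> {f..n}" using g Suc.prems by auto
    have "A n i (int (n + 1 - g)) = A n (int n - 1 - i) (int (n + 1 - (n + 1 - g)))"
      using Suc.IH[of "n + 1 - g" "i"] g Suc.prems by (auto simp: algebra_simps)
    also have "\<dots> = A n (int n - 1 - i) (int g)" proof -
      have "n + 1 - (n + 1 - g) = g" using g Suc.prems by auto
      thus ?thesis by (simp only:)
    qed
    finally show "A n i (int (n + 1 - g)) = A n (int n - 1 - i) (int g)" .
  next
    fix g assume g: "g \<in> {f..n}"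
    show "n + 1 - (n + 1 - g) = g" using g by auto
    show "n + 1 - g \<in> {1..<Suc n + 1 - f}" using g Suc.prems by auto
  qed
  also have "(\<Sum>g\<in>{Suc n + 1 - f..n}. A n (int n - i) (int g)) = (\<Sum>g\<in>{1..<f}. A n (i - 1) (int g))"
  proof (rule sum.reindex_bij_witness[where i="\<lambda>g. n + 1 - g" and j="\<lambda>g. n + 1 - g"])
    fix g assume g: "g \<in> {Suc n + 1 - f..n}"
    show "n + 1 - (n + 1 - g) = g" using g Suc.prems by auto
    show "n + 1 - g \<in> {1..<f}" using g Suc.prems by auto
    have "A n (i - 1) (int (n + 1 - g)) = A n (int n - 1 - (i - 1)) (int (n + 1 - (n + 1 - g)))"
      using Suc.IH[of "n + 1 - g" "i - 1"] g Suc.prems by auto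
    also have "\<dots> = A n (int n - i) (int g)" proof -
      have "n + 1 - (n + 1 - g) = g" using g Suc.prems by auto
      thus ?thesis by (simp add: algebra_simps)
    qed
    finally show "A n (i - 1) (int (n + 1 - g)) = A n (int n - i) (int g)" .
  next
    fix g assume g: "g \<in> {1..<f}"
    show "n + 1 - (n + 1 - g) = g" using g Suc.prems by auto
    show "n + 1 - g \<in> {Suc n + 1 - f..n}" using g Suc.prems by auto
  qed
  finally show ?case using A_rec[OF Suc.hyps(1), of f i] Suc.prems by simp
qed

definition D :: "nat \<Rightarrow> int \<Rightarrow> nat \<Rightarrow> int" where
  "D m k f = int (A m k (int f)) - int (A m (k - 1) (int f))"

lemma D_rec:
  assumes n: "n \<ge> 1" and f1: "1 \<le> f" and f2: "f \<le> Suc n"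
  shows "D (Suc n) k f = (\<Sum>g\<in>{1..<f}. D n (k-1) g) + (\<Sum>g\<in>{f..n}. D n k g)"
  using A_rec[OF assms, of k] A_rec[OF assms, of "k-1"]
  by (simp add: D_def sum_subtractf algebra_simps)

lemma D_anti1:
  assumes "n \<ge> 1" "1 \<le> g" "g \<le> n" "2 * k = int n"
  shows "D n k g = - D n k (n + 1 - g)"
proof -
  have e: "n + 1 - (n + 1 - g) = g" using assms by auto
  have "A n k (int g) = A n (int n - 1 - k) (int (n + 1 - g))" using A_sym assms by blast
  moreover have "A n (k - 1) (int g) = A n (int n - 1 - (k - 1)) (int (n + 1 - g))" using A_sym assms by blast
  moreover have "int n - 1 - k = k - 1" "int n - 1 - (k - 1) = k" using assms by auto
  ultimately show ?thesis by (simp add: D_def)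
qed

lemma D_anti2:
  assumes "n \<ge> 1" "1 \<le> g" "g \<le> n" "2 * k = int n + 1"
  shows "D n k g = - D n (k - 1) (n + 1 - g)"
proof -
  have "A n k (int g) = A n (int n - 1 - k) (int (n + 1 - g))" using A_sym assms by blast
  moreover have "A n (k - 1) (int g) = A n (int n - 1 - (k - 1)) (int (n + 1 - g))" using A_sym assms by blast
  moreover have "int n - 1 - k = k - 1 - 1" "int n - 1 - (k - 1) = k - 1" using assms by auto
  ultimately show ?thesis by (simp add: D_def)
qed

lemma tail_nonneg:
  fixes \<phi> :: "nat \<Rightarrow> int"
  assumes anti: "\<And>g. 1 \<le> g \<Longrightarrow> g \<le> n \<Longrightarrow> \<phi> g = - \<phi> (n + 1 - g)"
    and pos: "\<And>g. 1 \<le> g \<Longrightarrow> g \<le> n \<Longrightarrow> 2 * g > n \<Longrightarrow> \<phi> g \<ge> 0"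
    and f: "1 \<le> f"
  shows "(\<Sum>g\<in>{f..n}. \<phi> g) \<ge> 0"
proof (cases "2 * f > n")
  case True thus ?thesis using pos f by (intro sum_nonneg) auto
next
  case False
  have split: "{f..n} = {f..n+1-f} \<union> {n+2-f..n}" using False f by auto
  have z: "(\<Sum>g\<in>{f..n+1-f}. \<phi> g) = (\<Sum>g\<in>{f..n+1-f}. - \<phi> g)"
  proof (rule sum.reindex_bij_witness[where i="\<lambda>g. n + 1 - g" and j="\<lambda>g. n + 1 - g"])
    fix g assume g: "g \<in> {f..n+1-f}"
    show "n + 1 - (n + 1 - g) = g" using g False by auto
    show "n + 1 - g \<in> {f..n+1-f}" using g False by auto
    have e: "n + 1 - (n + 1 - g) = g" using g False by auto
    show "- \<phi> (n + 1 - g) = \<phi> g" using anti[of g] g f False by auto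
  next
    fix g assume g: "g \<in> {f..n+1-f}"
    show "n + 1 - (n + 1 - g) = g" using g False by auto
    show "n + 1 - g \<in> {f..n+1-f}" using g False by auto
  qed
  hence "(\<Sum>g\<in>{f..n+1-f}. \<phi> g) = 0" by (simp add: sum_negf)
  moreover have "(\<Sum>g\<in>{n+2-f..n}. \<phi> g) \<ge> 0" using pos False f by (intro sum_nonneg) auto
  ultimately show ?thesis unfolding split by (subst sum.union_disjoint) auto
qed

lemma main:
  assumes "m \<ge> 1"
  shows "\<forall>k f. 1 \<le> f \<and> f \<le> m \<and> (2 * k \<le> int m - 1 \<or> (2 * k = int m \<and> 2 * f > m)) \<longrightarrow> D m k f \<ge> 0"
  using assms
proof (induction m rule: nat_induct_at_least)
  case base
  show ?case by (auto simp: D_def A_def)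
next
  case (Suc n)
  show ?case
  proof (intro allI impI)
    fix k f assume H: "1 \<le> f \<and> f \<le> Suc n \<and> (2 * k \<le> int (Suc n) - 1 \<or> (2 * k = int (Suc n) \<and> 2 * f > Suc n))"
    hence f1: "1 \<le> f" and f2: "f \<le> Suc n" by auto
    note R = D_rec[OF Suc.hyps(1) f1 f2, of k]
    show "D (Suc n) k f \<ge> 0"
    proof (cases "2 * k \<le> int n")
      case True
      have s1: "(\<Sum>g\<in>{1..<f}. D n (k-1) g) \<ge> 0"
        using Suc.IH True f2 by (intro sum_nonneg) auto
      have s2: "(\<Sum>g\<in>{f..n}. D n k g) \<ge> 0"
      proof (cases "2 * k \<le> int n - 1")
        case True
        thus ?thesis using Suc.IH f1 by (intro sum_nonneg) auto
      next
        case False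
        hence kk: "2 * k = int n" using \<open>2 * k \<le> int n\<close> by simp
        show ?thesis
        proof (rule tail_nonneg[OF _ _ f1])
          fix g assume "1 \<le> g" "g \<le> n"
          thus "D n k g = - D n k (n + 1 - g)" using D_anti1[OF Suc.hyps(1) _ _ kk] by blast
        next
          fix g assume "1 \<le> g" "g \<le> n" "2 * g > n"
          thus "D n k g \<ge> 0" using Suc.IH kk by auto
        qed
      qed
      show ?thesis using R s1 s2 by simp
    next
      case False
      hence kk: "2 * k = int n + 1" and ff: "2 * f > Suc n" using H by auto
      have eq: "(\<Sum>g\<in>{f..n}. D n k g) = - (\<Sum>g\<in>{1..n+1-f}. D n (k-1) g)"
      proof -
        have "(\<Sum>g\<in>{f..n}. D n k g) = (\<Sum>g\<in>{f..n}. - D n (k-1) (n + 1 - g))"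
          using D_anti2[OF Suc.hyps(1) _ _ kk] f1 by (intro sum.cong) auto
        also have "\<dots> = (\<Sum>g\<in>{1..n+1-f}. - D n (k-1) g)"
        proof (rule sum.reindex_bij_witness[where i="\<lambda>g. n + 1 - g" and j="\<lambda>g. n + 1 - g"])
          fix g assume g: "g \<in> {f..n}"
          show "n + 1 - (n + 1 - g) = g" using g by auto
          show "n + 1 - g \<in> {1..n+1-f}" using g by auto
          show "- D n (k - 1) (n + 1 - g) = - D n (k - 1) (n + 1 - g)" ..
        next
          fix g assume g: "g \<in> {1..n+1-f}"
          show "n + 1 - (n + 1 - g) = g" using g f1 by auto
          show "n + 1 - g \<in> {f..n}" using g f1 by auto
        qed
        finally show ?thesis by (simp add: sum_negf)
      qed
      have "(\<Sum>g\<in>{1..n+1-f}. D n (k-1) g) \<le> (\<Sum>g\<in>{1..<f}. D n (k-1) g)"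
        using Suc.IH kk ff f2 by (intro sum_mono2) auto
      thus ?thesis using R eq by simp
    qed
  qed
qed

lemma A_step:
  assumes n: "n \<ge> 1" and f1: "1 \<le> f" and f2: "f \<le> n"
  shows "int (A (Suc n) k (int f)) - int (A (Suc n) k (int (Suc f))) = D n k f"
proof -
  have a: "{1..<Suc f} = insert f {1..<f}" using f1 by auto
  have b: "{f..n} = insert f {Suc f..n}" using f2 by auto
  show ?thesis
    using A_rec[OF n f1, of k] A_rec[OF n _ , of "Suc f" k] f2 unfolding a b
    by (simp add: D_def)
qed

theorem lemma2p10:
  fixes d :: nat
  assumes "d \<ge> 1"
  defines "r \<equiv> (int d - 1) div 2"
  defines "N \<equiv> (if even d then -1 else r)"
  shows "(\<forall>i j. 0 \<le> i \<and> i \<le> r \<and> (if i < r then -1 else N) \<le> j \<and> j < int d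
              \<longrightarrow> h d i (j + 1) \<le> h d i j)
       \<and> (\<forall>i. 0 \<le> i \<and> i < r \<longrightarrow> h d i (-1) \<le> h d (i + 1) (int d))"
proof (intro conjI allI impI)
  fix i j assume H: "0 \<le> i \<and> i \<le> r \<and> (if i < r then -1 else N) \<le> j \<and> j < int d"
  define f where "f = nat (j + 2)"
  have jN: "j \<ge> -1" using H by (auto simp: N_def r_def split: if_splits)
  have fj: "int f = j + 2" using jN by (simp add: f_def)
  have f1: "1 \<le> f" and f2: "f \<le> d + 1" using fj H jN by linarith+
  have n1: "d + 1 \<ge> 1" by simp
  have cond: "2 * (i + 1) \<le> int (d + 1) - 1 \<or> (2 * (i + 1) = int (d + 1) \<and> 2 * f > d + 1)"
  proof (cases "i < r")
    case True thus ?thesis unfolding r_def by presburger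
  next
    case False
    hence ir: "i = r" using H by simp
    show ?thesis
    proof (cases "even d")
      case True thus ?thesis using ir unfolding r_def by presburger
    next
      case odd: False
      have "j \<ge> r" using H False odd by (simp add: N_def)
      thus ?thesis using ir odd fj unfolding r_def by presburger
    qed
  qed
  have "D (d + 1) (i + 1) f \<ge> 0" using main[OF n1] f1 f2 cond by blast
  moreover have "int (A (Suc (d + 1)) (i + 1) (int f)) - int (A (Suc (d + 1)) (i + 1) (int (Suc f))) = D (d + 1) (i + 1) f"
    by (rule A_step[OF n1 f1 f2])
  moreover have "h d i (j + 1) = A (Suc (d + 1)) (i + 1) (int (Suc f))" "h d i j = A (Suc (d + 1)) (i + 1) (int f)"
    using fj by (simp_all add: h_def algebra_simps)
  ultimately show "h d i (j + 1) \<le> h d i j" by simp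
next
  fix i assume H: "0 \<le> i \<and> i < r"
  have n1: "d + 1 \<ge> 1" by simp
  have "h d i (-1) = A (Suc (d + 1)) (i + 1) (int 1)" by (simp add: h_def)
  also have "\<dots> = (\<Sum>g\<in>{1..d+1}. A (d+1) (i + 1) (int g))"
    using A_rec[OF n1, of 1 "i + 1"] by simp
  also have "\<dots> = A (Suc (d + 1)) (i + 1 + 1) (int (Suc (d + 1)))"
    using A_rec[OF n1, of "Suc (d + 1)" "i + 1 + 1"] by (simp add: atLeastLessThanSuc_atLeastAtMost add.commute)
  also have "\<dots> = h d (i + 1) (int d)" by (simp add: h_def algebra_simps)
  finally show "h d i (-1) \<le> h d (i + 1) (int d)" by simp
qed

end
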